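(* Let $\pi$ be a polygon without self-intersections with edges $\pi_1,\dots,\pi_R$, and let $\lambda_r=\lambda(v_r)$ where $v_r$ is a direction vector of $\pi_r$. For $k\in\mathbb N$ let $B_k\pi=\{kx:x\in\pi\}$ and let $L_k\pi$ be the lattice approximation of $B_k\pi$. Then $$\lim_{k\to\infty}\frac{|L_k\pi|}{\operatorname{length}B_k\pi}=\sum_{r=1}^R\frac{1}{\sqrt{1+\lambda_r^2}}\,\frac{\operatorname{length}\pi_r}{\operatorname{length}\pi}.$$
   Context: $\lambda(v)=\min(|v_2/v_1|,|v_1/v_2|)\in[0,1]$ for $v=(v_1,v_2)\ne0$. Lattice approximation of a nondegenerate segment $s$ with direction $v$: if $|v_2|\le|v_1|$ write $s=\{(x,\lambda x+b):x\in I\}$, $\lambda=v_2/v_1$, $L(s)=\{(z,\lfloor\lambda z+b\rfloor):z\in I\cap\mathbb Z\}$; otherwise write $s=\{(\mu y+b,y):y\in J\}$, $\mu=v_1/v_2$, $L(s)=\{(\lfloor\mu z+b\rfloor,z):z\in J\cap\mathbb Z\}$. The lattice approximation of a polygon is the union of the lattice approximations of its edges. Lengths are Euclidean. *)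

theory Defs
  imports "HOL-Analysis.Analysis"
begin

text \<open>Points of the plane are pairs of reals; the metric on real \<times> real is Euclidean.\<close>

definition lam :: "real \<times> real \<Rightarrow> real" where
  "lam v = min \<bar>snd v / fst v\<bar> \<bar>fst v / snd v\<bar>"

definition seg_lattice :: "real \<times> real \<Rightarrow> real \<times> real \<Rightarrow> (int \<times> int) set" where
  "seg_lattice a b =
    (let v = b - a in
     if \<bar>snd v\<bar> \<le> \<bar>fst v\<bar> then
       (let l = snd v / fst v; c = snd a - l * fst a in
        {(z, \<lfloor>l * of_int z + c\<rfloor>) | z. min (fst a) (fst b) \<le> of_int z \<and> of_int z \<le> max (fst a) (fst b)})
     else
       (let m = fst v / snd v; c = fst a - m * snd a in
        {(\<lfloor>m * of_int z + c\<rfloor>, z) | z. min (snd a) (snd b) \<le> of_int z \<and> of_int z \<le> max (snd a) (snd b)}))"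

text \<open>A polygon with R vertices p 0, ..., p (R-1); edge r joins p r and p ((r+1) mod R).\<close>
definition simple_polygon :: "nat \<Rightarrow> (nat \<Rightarrow> real \<times> real) \<Rightarrow> bool" where
  "simple_polygon R p \<longleftrightarrow> R \<ge> 3 \<and> inj_on p {..<R} \<and>
     (\<forall>i<R. \<forall>j<R. i \<noteq> j \<longrightarrow>
        closed_segment (p i) (p (Suc i mod R)) \<inter> closed_segment (p j) (p (Suc j mod R))
          \<subseteq> {p i, p (Suc i mod R)} \<inter> {p j, p (Suc j mod R)})"

definition polygon_lattice :: "nat \<Rightarrow> (nat \<Rightarrow> real \<times> real) \<Rightarrow> (int \<times> int) set" where
  "polygon_lattice R p = (\<Union>r<R. seg_lattice (p r) (p (Suc r mod R)))"

definition perimeter :: "nat \<Rightarrow> (nat \<Rightarrow> real \<times> real) \<Rightarrow> real" where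
  "perimeter R p = (\<Sum>r<R. dist (p r) (p (Suc r mod R)))"

end

theory Submission
  imports Defs
begin

lemma normsq_expand:
  fixes u v :: "'a::real_inner"
  shows "(norm (s *\<^sub>R u - t *\<^sub>R v))\<^sup>2 = s\<^sup>2 * (u \<bullet> u) - 2 * s * t * (u \<bullet> v) + t\<^sup>2 * (v \<bullet> v)"
  unfolding power2_norm_eq_inner by (simp add: inner_diff_left inner_diff_right inner_commute power2_eq_square algebra_simps)

lemma cone_sep:
  fixes u v :: "'a::real_inner"
  assumes u: "u \<noteq> 0"
    and H: "\<And>s t. 0\<le>s \<Longrightarrow> s\<le>1 \<Longrightarrow> 0\<le>t \<Longrightarrow> t\<le>1 \<Longrightarrow> s *\<^sub>R u = t *\<^sub>R v \<Longrightarrow> s = 0"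
  shows "\<exists>\<delta>>0. \<forall>s t. 0 \<le> s \<longrightarrow> 0 \<le> t \<longrightarrow> \<delta> * s \<le> norm (s *\<^sub>R u - t *\<^sub>R v)"
proof -
  define A where "A = u \<bullet> u"
  define B where "B = v \<bullet> v"
  define C where "C = u \<bullet> v"
  have A: "A > 0" using u by (simp add: A_def)
  have B: "B \<ge> 0" by (simp add: B_def)
  have CS: "C\<^sup>2 \<le> A * B"
    unfolding A_def B_def C_def
    by (metis Cauchy_Schwarz_ineq)
  have key: "\<exists>e>0. \<forall>s t. 0 \<le> s \<longrightarrow> 0 \<le> t \<longrightarrow> e * s\<^sup>2 \<le> (norm (s *\<^sub>R u - t *\<^sub>R v))\<^sup>2"
  proof (cases "C \<le> 0")
    case True
    show ?thesis
    proof (intro exI[of _ A] conjI allI impI)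
      fix s t :: real assume "0 \<le> s" "0 \<le> t"
      hence "s * t * C \<le> 0" using True by (simp add: mult_nonneg_nonpos)
      moreover have "t\<^sup>2 * B \<ge> 0" using B by simp
      ultimately have "0 \<le> - 2 * s * t * C + t\<^sup>2 * B" by linarith
      thus "A * s\<^sup>2 \<le> (norm (s *\<^sub>R u - t *\<^sub>R v))\<^sup>2"
        unfolding normsq_expand A_def[symmetric] B_def[symmetric] C_def[symmetric] by simp
    qed (use A in auto)
  next
    case False
    hence C: "C > 0" by simp
    hence Bp: "B > 0" using CS A B
      by (metis mult_zero_right not_less zero_less_power2 order.strict_iff_order)
    have strict: "C\<^sup>2 < A * B"
    proof (rule ccontr)
      assume "\<not> C\<^sup>2 < A * B"
      hence eq: "C\<^sup>2 = A * B" using CS by simp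
      define s0 where "s0 = min 1 (B / C)"
      define t0 where "t0 = s0 * C / B"
      have s0: "0 < s0" "s0 \<le> 1" using C Bp by (auto simp: s0_def)
      have t0: "0 \<le> t0" "t0 \<le> 1"
        using s0 C Bp by (auto simp: t0_def s0_def field_simps min_def)
      have "(norm (s0 *\<^sub>R u - t0 *\<^sub>R v))\<^sup>2 = s0\<^sup>2 * A - 2 * s0 * t0 * C + t0\<^sup>2 * B"
        unfolding normsq_expand A_def B_def C_def ..
      also have "\<dots> = s0\<^sup>2 * (A * B - C\<^sup>2) / B"
        using Bp by (simp add: t0_def field_simps power2_eq_square)
      also have "\<dots> = 0" using eq by simp
      finally have "s0 *\<^sub>R u = t0 *\<^sub>R v" by simp
      hence "s0 = 0" using H s0 t0 by auto
      thus False using s0 by simp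
    qed
    show ?thesis
    proof (intro exI[of _ "(A * B - C\<^sup>2) / B"] conjI allI impI)
      fix s t :: real assume "0 \<le> s" "0 \<le> t"
      have "(norm (s *\<^sub>R u - t *\<^sub>R v))\<^sup>2 = s\<^sup>2 * A - 2 * s * t * C + t\<^sup>2 * B"
        unfolding normsq_expand A_def B_def C_def ..
      also have "\<dots> = B * (t - s * C / B)\<^sup>2 + s\<^sup>2 * ((A * B - C\<^sup>2) / B)"
        using Bp by (simp add: field_simps power2_eq_square)
      finally show "(A * B - C\<^sup>2) / B * s\<^sup>2 \<le> (norm (s *\<^sub>R u - t *\<^sub>R v))\<^sup>2"
        using Bp by (simp add: mult.commute)
    qed (use strict Bp in auto)
  qed
  then obtain e where e: "e > 0" "\<And>s t. 0 \<le> s \<Longrightarrow> 0 \<le> t \<Longrightarrow> e * s\<^sup>2 \<le> (norm (s *\<^sub>R u - t *\<^sub>R v))\<^sup>2"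
    by blast
  show ?thesis
  proof (intro exI[of _ "sqrt e"] conjI allI impI)
    fix s t :: real assume st: "0 \<le> s" "0 \<le> t"
    have "(sqrt e * s)\<^sup>2 \<le> (norm (s *\<^sub>R u - t *\<^sub>R v))\<^sup>2"
      using e(1) e(2)[OF st] by (simp add: power_mult_distrib)
    thus "sqrt e * s \<le> norm (s *\<^sub>R u - t *\<^sub>R v)"
      by (rule power2_le_imp_le) simp
  qed (use e in auto)
qed

lemma seg_sep_vertex:
  fixes w b c :: "real \<times> real"
  assumes wb: "w \<noteq> b" and I: "closed_segment w b \<inter> closed_segment w c \<subseteq> {w}"
  shows "\<exists>\<delta>>0. \<forall>x\<in>closed_segment w b. \<forall>y\<in>closed_segment w c. \<delta> * dist x w \<le> dist x y"
proof -
  have "\<exists>\<delta>>0. \<forall>s t. 0 \<le> s \<longrightarrow> 0 \<le> t \<longrightarrow> \<delta> * s \<le> norm (s *\<^sub>R (b - w) - t *\<^sub>R (c - w))"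
  proof (rule cone_sep)
    show "b - w \<noteq> 0" using wb by simp
  next
    fix s t :: real assume st: "0\<le>s" "s\<le>1" "0\<le>t" "t\<le>1" and eq: "s *\<^sub>R (b - w) = t *\<^sub>R (c - w)"
    have "w + s *\<^sub>R (b - w) \<in> closed_segment w b"
      unfolding in_segment using st by (intro exI[of _ s]) (auto simp: algebra_simps)
    moreover have "w + s *\<^sub>R (b - w) \<in> closed_segment w c"
      unfolding in_segment eq using st by (intro exI[of _ t]) (auto simp: algebra_simps)
    ultimately have "w + s *\<^sub>R (b - w) = w" using I by blast
    hence "s *\<^sub>R (b - w) = 0" by simp
    thus "s = 0" using wb by simp
  qed
  then obtain \<delta> where d: "\<delta> > 0" "\<And>s t. 0 \<le> s \<Longrightarrow> 0 \<le> t \<Longrightarrow> \<delta> * s \<le> norm (s *\<^sub>R (b - w) - t *\<^sub>R (c - w))"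
    by blast
  have nb: "norm (b - w) > 0" using wb by simp
  show ?thesis
  proof (intro exI[of _ "\<delta> / norm (b - w)"] conjI ballI)
    fix x y assume x: "x \<in> closed_segment w b" and y: "y \<in> closed_segment w c"
    obtain s where s: "0 \<le> s" "s \<le> 1" "x = (1 - s) *\<^sub>R w + s *\<^sub>R b" using x unfolding in_segment by blast
    obtain t where t: "0 \<le> t" "t \<le> 1" "y = (1 - t) *\<^sub>R w + t *\<^sub>R c" using y unfolding in_segment by blast
    have dx: "dist x w = s * norm (b - w)"
    proof -
      have "x - w = s *\<^sub>R (b - w)" using s(3) by (simp add: algebra_simps)
      thus ?thesis using s(1) by (simp add: dist_norm)
    qed
    have dxy: "dist x y = norm (s *\<^sub>R (b - w) - t *\<^sub>R (c - w))"
    proof -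
      have "x - y = s *\<^sub>R (b - w) - t *\<^sub>R (c - w)" unfolding s(3) t(3) by (simp add: algebra_simps)
      thus ?thesis by (simp add: dist_norm)
    qed
    show "\<delta> / norm (b - w) * dist x w \<le> dist x y"
      using d(2)[OF s(1) t(1)] nb unfolding dx dxy by simp
  qed (use d nb in auto)
qed

lemma seg_pair_sep:
  fixes a b c d :: "real \<times> real"
  assumes ab: "a \<noteq> b" and I: "closed_segment a b \<inter> closed_segment c d \<subseteq> {a, b}"
  shows "\<exists>w \<delta>. \<delta> > 0 \<and> (\<forall>x\<in>closed_segment a b. \<forall>y\<in>closed_segment c d. \<delta> * dist x w \<le> dist x y)"
proof (cases "closed_segment a b \<inter> closed_segment c d = {}")
  case True
  obtain e where e: "e > 0" "\<forall>x\<in>closed_segment a b. \<forall>y\<in>closed_segment c d. e \<le> dist x y"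
    using separate_compact_closed[OF compact_segment closed_segment True] by blast
  have dab: "dist a b > 0" using ab by simp
  show ?thesis
  proof (intro exI[of _ a] exI[of _ "e / dist a b"] conjI ballI)
    fix x y assume x: "x \<in> closed_segment a b" and y: "y \<in> closed_segment c d"
    have "dist x a \<le> dist a b" using dist_in_closed_segment[OF x] by simp
    hence "e / dist a b * dist x a \<le> e" using dab e(1)
      by (simp add: field_simps mult_left_mono)
    thus "e / dist a b * dist x a \<le> dist x y" using e(2) x y by fastforce
  qed (use e dab in auto)
next
  case False
  then obtain w where w: "w \<in> closed_segment a b" "w \<in> closed_segment c d" "w = a \<or> w = b" using I by blast
  obtain f where f: "closed_segment a b = closed_segment w f" "w \<noteq> f" "f = a \<or> f = b"
    using w(3) ab by (metis closed_segment_commute)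
  have fnot: "f \<notin> closed_segment c d"
  proof
    assume "f \<in> closed_segment c d"
    hence "closed_segment w f \<subseteq> closed_segment c d" using w(2) by (simp add: subset_closed_segment)
    hence "closed_segment a b \<subseteq> {a, b}" using I f(1) by blast
    hence "finite (closed_segment a b)" by (rule finite_subset) simp
    thus False using ab by (simp add: finite_closed_segment)
  qed
  have I2: "closed_segment w f \<inter> closed_segment c d \<subseteq> {w}"
    using I f fnot by auto
  have cd: "closed_segment c d = closed_segment w c \<union> closed_segment w d"
    using Un_closed_segment[OF w(2)] by (simp add: closed_segment_commute)
  obtain d1 where d1: "d1 > 0" "\<forall>x\<in>closed_segment w f. \<forall>y\<in>closed_segment w c. d1 * dist x w \<le> dist x y"
    using seg_sep_vertex[OF f(2)] I2 cd by (metis Int_Un_distrib le_sup_iff)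
  obtain d2 where d2: "d2 > 0" "\<forall>x\<in>closed_segment w f. \<forall>y\<in>closed_segment w d. d2 * dist x w \<le> dist x y"
    using seg_sep_vertex[OF f(2)] I2 cd by (metis Int_Un_distrib le_sup_iff)
  show ?thesis
  proof (intro exI[of _ w] exI[of _ "min d1 d2"] conjI ballI)
    fix x y assume x: "x \<in> closed_segment a b" and y: "y \<in> closed_segment c d"
    have "min d1 d2 * dist x w \<le> d1 * dist x w" "min d1 d2 * dist x w \<le> d2 * dist x w"
      by (simp_all add: mult_right_mono)
    thus "min d1 d2 * dist x w \<le> dist x y" using d1(2) d2(2) x y f(1) cd by fastforce
  qed (use d1 d2 in auto)
qed

lemma lin_comb: "(1 - t) * a + t * (b::real) = a + t * (b - a)"
  by (simp add: algebra_simps)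

lemma interp1:
  fixes a1 b1 z :: real
  assumes ne: "a1 \<noteq> b1" and z: "min a1 b1 \<le> z" "z \<le> max a1 b1"
  shows "0 \<le> (z - a1) / (b1 - a1)" "(z - a1) / (b1 - a1) \<le> 1"
    "(1 - (z - a1) / (b1 - a1)) * a1 + (z - a1) / (b1 - a1) * b1 = z"
proof -
  have d: "b1 - a1 \<noteq> 0" using ne by simp
  show "0 \<le> (z - a1) / (b1 - a1)" "(z - a1) / (b1 - a1) \<le> 1"
  proof -
    have "(0 \<le> (z - a1) / (b1 - a1)) \<and> ((z - a1) / (b1 - a1) \<le> 1)"
    proof (cases "a1 < b1")
      case True
      hence "0 \<le> z - a1" "z - a1 \<le> b1 - a1" using z by auto
      thus ?thesis using True by (simp add: divide_le_eq_1)
    next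
      case False
      hence lt: "b1 < a1" using ne by simp
      hence "z - a1 \<le> 0" "b1 - a1 \<le> z - a1" using z by auto
      thus ?thesis using lt by (simp add: divide_le_eq_1 divide_nonpos_neg)
    qed
    thus "0 \<le> (z - a1) / (b1 - a1)" "(z - a1) / (b1 - a1) \<le> 1" by auto
  qed
  have e: "(z - a1) / (b1 - a1) * (b1 - a1) = z - a1" using d by simp
  have "(1 - (z - a1) / (b1 - a1)) * a1 + (z - a1) / (b1 - a1) * b1
        = a1 + (z - a1) / (b1 - a1) * (b1 - a1)" by (rule lin_comb)
  thus "(1 - (z - a1) / (b1 - a1)) * a1 + (z - a1) / (b1 - a1) * b1 = z" using e by simp
qed

lemma interp2:
  fixes a1 b1 a2 b2 z :: real
  shows "(1 - (z - a1) / (b1 - a1)) * a2 + (z - a1) / (b1 - a1) * b2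
       = (b2 - a2) / (b1 - a1) * z + (a2 - (b2 - a2) / (b1 - a1) * a1)"
proof -
  have "(1 - (z - a1) / (b1 - a1)) * a2 + (z - a1) / (b1 - a1) * b2
        = a2 + (z - a1) / (b1 - a1) * (b2 - a2)" by (rule lin_comb)
  also have "(z - a1) / (b1 - a1) * (b2 - a2) = (b2 - a2) / (b1 - a1) * (z - a1)" by simp
  finally show ?thesis by (simp add: right_diff_distrib)
qed

definition rp :: "int \<times> int \<Rightarrow> real \<times> real" where
  "rp q = (real_of_int (fst q), real_of_int (snd q))"

lemma floor_dist_lt1: "\<bar>real_of_int \<lfloor>y\<rfloor> - y\<bar> < 1"
  using floor_correct[of y] by linarith

lemma seg_lattice_near:
  assumes q: "q \<in> seg_lattice a b"
  shows "\<exists>x\<in>closed_segment a b. dist (rp q) x < 1"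
proof (cases "\<bar>snd (b - a)\<bar> \<le> \<bar>fst (b - a)\<bar>")
  case True
  define l where "l = snd (b - a) / fst (b - a)"
  define c where "c = snd a - l * fst a"
  obtain z where z: "q = (z, \<lfloor>l * of_int z + c\<rfloor>)" "min (fst a) (fst b) \<le> of_int z" "of_int z \<le> max (fst a) (fst b)"
    using q True unfolding seg_lattice_def Let_def l_def c_def by auto
  define x where "x = (real_of_int z, l * of_int z + c)"
  have dx: "dist (rp q) x < 1"
    using floor_dist_lt1[of "l * of_int z + c"] unfolding x_def rp_def z(1) dist_Pair_Pair
    by (simp add: dist_real_def)
  have "x \<in> closed_segment a b"
  proof (cases "fst a = fst b")
    case True2: True
    hence "snd a = snd b" using True by simp
    hence "a = b" using True2 by (simp add: prod_eq_iff)
    have "real_of_int z = fst a" using z True2 by simp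
    moreover have "l = 0" using True2 by (simp add: l_def)
    ultimately have "x = a" by (simp add: x_def c_def)
    thus ?thesis by simp
  next
    case False
    note I = interp1[OF False z(2) z(3)] interp2[of "of_int z" "fst a" "fst b" "snd a" "snd b"]
    show ?thesis unfolding in_segment
      apply (rule exI[of _ "(of_int z - fst a) / (fst b - fst a)"])
      using I by (simp add: x_def l_def c_def prod_eq_iff)
  qed
  thus ?thesis using dx by blast
next
  case False
  define l where "l = fst (b - a) / snd (b - a)"
  define c where "c = fst a - l * snd a"
  obtain z where z: "q = (\<lfloor>l * of_int z + c\<rfloor>, z)" "min (snd a) (snd b) \<le> of_int z" "of_int z \<le> max (snd a) (snd b)"
    using q False unfolding seg_lattice_def Let_def l_def c_def by auto
  define x where "x = (l * of_int z + c, real_of_int z)"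
  have dx: "dist (rp q) x < 1"
    using floor_dist_lt1[of "l * of_int z + c"] unfolding x_def rp_def z(1) dist_Pair_Pair
    by (simp add: dist_real_def)
  have ne: "snd a \<noteq> snd b" using False by auto
  note I = interp1[OF ne z(2) z(3)] interp2[of "of_int z" "snd a" "snd b" "fst a" "fst b"]
  have "x \<in> closed_segment a b" unfolding in_segment
      apply (rule exI[of _ "(of_int z - snd a) / (snd b - snd a)"])
      using I by (simp add: x_def l_def c_def prod_eq_iff)
  thus ?thesis using dx by blast
qed



definition M :: "real \<times> real \<Rightarrow> real" where "M v = max \<bar>fst v\<bar> \<bar>snd v\<bar>"

lemma int_count:
  fixes lo hi :: real
  assumes "lo \<le> hi"
  shows "\<bar>real (card {\<lceil>lo\<rceil>..\<lfloor>hi\<rfloor>}) - (hi - lo)\<bar> \<le> 1"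
proof -
  have f1: "real_of_int \<lfloor>hi\<rfloor> \<le> hi" "hi < real_of_int \<lfloor>hi\<rfloor> + 1" by linarith+
  have c1: "lo \<le> real_of_int \<lceil>lo\<rceil>" "real_of_int \<lceil>lo\<rceil> < lo + 1" by linarith+
  have "real (card {\<lceil>lo\<rceil>..\<lfloor>hi\<rfloor>}) = real (nat (\<lfloor>hi\<rfloor> - \<lceil>lo\<rceil> + 1))" by simp
  also have "\<dots> = max 0 (real_of_int (\<lfloor>hi\<rfloor> - \<lceil>lo\<rceil> + 1))"
    by (simp add: max_def)
  finally have e: "real (card {\<lceil>lo\<rceil>..\<lfloor>hi\<rfloor>}) = max 0 (real_of_int \<lfloor>hi\<rfloor> - real_of_int \<lceil>lo\<rceil> + 1)" by simp
  show ?thesis unfolding e abs_le_iff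
  proof (cases "0 \<le> real_of_int \<lfloor>hi\<rfloor> - real_of_int \<lceil>lo\<rceil> + 1")
    case True thus "max 0 (real_of_int \<lfloor>hi\<rfloor> - real_of_int \<lceil>lo\<rceil> + 1) - (hi - lo) \<le> 1 \<and>
    - (max 0 (real_of_int \<lfloor>hi\<rfloor> - real_of_int \<lceil>lo\<rceil> + 1) - (hi - lo)) \<le> 1"
      using f1 c1 assms by (simp only: max_absorb2) linarith
  next
    case False thus "max 0 (real_of_int \<lfloor>hi\<rfloor> - real_of_int \<lceil>lo\<rceil> + 1) - (hi - lo) \<le> 1 \<and>
    - (max 0 (real_of_int \<lfloor>hi\<rfloor> - real_of_int \<lceil>lo\<rceil> + 1) - (hi - lo)) \<le> 1"
      using f1 c1 assms by (simp only: max_absorb1 not_le less_imp_le)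
  qed
qed

lemma graph_image:
  fixes lo hi :: real and f :: "int \<Rightarrow> int"
  shows "{(z, f z) | z. lo \<le> of_int z \<and> of_int z \<le> hi} = (\<lambda>z. (z, f z)) ` {\<lceil>lo\<rceil>..\<lfloor>hi\<rfloor>}"
  by (auto simp: ceiling_le_iff le_floor_iff)

lemma graph_image2:
  fixes lo hi :: real and f :: "int \<Rightarrow> int"
  shows "{(f z, z) | z. lo \<le> of_int z \<and> of_int z \<le> hi} = (\<lambda>z. (f z, z)) ` {\<lceil>lo\<rceil>..\<lfloor>hi\<rfloor>}"
  by (auto simp: ceiling_le_iff le_floor_iff)

lemma seg_lattice_card:
  shows "finite (seg_lattice a b)" "\<bar>real (card (seg_lattice a b)) - M (b - a)\<bar> \<le> 1"
proof -
  have "finite (seg_lattice a b) \<and> \<bar>real (card (seg_lattice a b)) - M (b - a)\<bar> \<le> 1"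
  proof (cases "\<bar>snd (b - a)\<bar> \<le> \<bar>fst (b - a)\<bar>")
    case True
    define l where "l = snd (b - a) / fst (b - a)"
    define c where "c = snd a - l * fst a"
    have S: "seg_lattice a b = (\<lambda>z. (z, \<lfloor>l * of_int z + c\<rfloor>)) ` {\<lceil>min (fst a) (fst b)\<rceil>..\<lfloor>max (fst a) (fst b)\<rfloor>}"
      unfolding seg_lattice_def Let_def using True
      by (simp only: if_True l_def[symmetric] c_def[symmetric] graph_image)
    have inj: "inj_on (\<lambda>z. (z, \<lfloor>l * of_int z + c\<rfloor>)) X" for X by (auto simp: inj_on_def)
    have C: "card (seg_lattice a b) = card {\<lceil>min (fst a) (fst b)\<rceil>..\<lfloor>max (fst a) (fst b)\<rfloor>}"
      unfolding S by (rule card_image[OF inj])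
    have M: "M (b - a) = max (fst a) (fst b) - min (fst a) (fst b)"
      using True by (auto simp: M_def max_def min_def abs_if)
    show ?thesis unfolding C M using int_count[of "min (fst a) (fst b)" "max (fst a) (fst b)"]
      by (simp add: S)
  next
    case False
    define l where "l = fst (b - a) / snd (b - a)"
    define c where "c = fst a - l * snd a"
    have S: "seg_lattice a b = (\<lambda>z. (\<lfloor>l * of_int z + c\<rfloor>, z)) ` {\<lceil>min (snd a) (snd b)\<rceil>..\<lfloor>max (snd a) (snd b)\<rfloor>}"
      unfolding seg_lattice_def Let_def using False
      by (simp only: if_False l_def[symmetric] c_def[symmetric] graph_image2)
    have inj: "inj_on (\<lambda>z. (\<lfloor>l * of_int z + c\<rfloor>, z)) X" for X by (auto simp: inj_on_def)
    have C: "card (seg_lattice a b) = card {\<lceil>min (snd a) (snd b)\<rceil>..\<lfloor>max (snd a) (snd b)\<rfloor>}"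
      unfolding S by (rule card_image[OF inj])
    have M: "M (b - a) = max (snd a) (snd b) - min (snd a) (snd b)"
      using False by (auto simp: M_def max_def min_def abs_if)
    show ?thesis unfolding C M using int_count[of "min (snd a) (snd b)" "max (snd a) (snd b)"]
      by (simp add: S)
  qed
  thus "finite (seg_lattice a b)" "\<bar>real (card (seg_lattice a b)) - M (b - a)\<bar> \<le> 1" by auto
qed



lemma int_count_ub: "(lo::real) \<le> hi \<Longrightarrow> real (card {\<lceil>lo\<rceil>..\<lfloor>hi\<rfloor>}) \<le> hi - lo + 1"
  using int_count[of lo hi] by (simp add: abs_le_iff)


lemma dist_scale: "dist (k *\<^sub>R x) (k *\<^sub>R y) = \<bar>k\<bar> * dist x (y :: 'a::real_normed_vector)"
  by (simp add: dist_norm scaleR_right_diff_distrib[symmetric])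

lemma scaled_segment:
  assumes "x \<in> closed_segment (k *\<^sub>R a) (k *\<^sub>R b)"
  shows "\<exists>x0\<in>closed_segment a b. x = k *\<^sub>R x0"
proof -
  obtain u where u: "0 \<le> u" "u \<le> 1" "x = (1 - u) *\<^sub>R (k *\<^sub>R a) + u *\<^sub>R (k *\<^sub>R b)"
    using assms unfolding in_segment by blast
  have "x = k *\<^sub>R ((1 - u) *\<^sub>R a + u *\<^sub>R b)" using u(3) by (simp add: scaleR_right_distrib mult.commute)
  moreover have "(1 - u) *\<^sub>R a + u *\<^sub>R b \<in> closed_segment a b" unfolding in_segment using u by blast
  ultimately show ?thesis by blast
qed

lemma int_ball_card:
  fixes C :: real assumes C: "0 \<le> C"
  shows "finite {q. dist (rp q) c \<le> C} \<and> real (card {q. dist (rp q) c \<le> C}) \<le> (2 * C + 1)\<^sup>2"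
proof -
  define I1 where "I1 = {\<lceil>fst c - C\<rceil>..\<lfloor>fst c + C\<rfloor>}"
  define I2 where "I2 = {\<lceil>snd c - C\<rceil>..\<lfloor>snd c + C\<rfloor>}"
  have sub: "{q. dist (rp q) c \<le> C} \<subseteq> I1 \<times> I2"
  proof
    fix q assume "q \<in> {q. dist (rp q) c \<le> C}"
    hence d: "dist (rp q) c \<le> C" by simp
    have "dist (fst (rp q)) (fst c) \<le> C" "dist (snd (rp q)) (snd c) \<le> C"
      using d dist_fst_le[of "rp q" c] dist_snd_le[of "rp q" c] by linarith+
    hence "\<bar>real_of_int (fst q) - fst c\<bar> \<le> C" "\<bar>real_of_int (snd q) - snd c\<bar> \<le> C"
      by (simp_all add: rp_def dist_real_def)
    thus "q \<in> I1 \<times> I2" unfolding I1_def I2_def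
      by (cases q) (auto simp: ceiling_le_iff le_floor_iff abs_le_iff)
  qed
  have c1: "real (card I1) \<le> 2 * C + 1"
    using int_count_ub[of "fst c - C" "fst c + C"] C unfolding I1_def by simp
  have c2: "real (card I2) \<le> 2 * C + 1"
    using int_count_ub[of "snd c - C" "snd c + C"] C unfolding I2_def by simp
  have fin: "finite (I1 \<times> I2)" unfolding I1_def I2_def by simp
  have "real (card {q. dist (rp q) c \<le> C}) \<le> real (card (I1 \<times> I2))"
    using card_mono[OF fin sub] by simp
  also have "\<dots> = real (card I1) * real (card I2)" by (simp add: card_cartesian_product)
  also have "\<dots> \<le> (2 * C + 1) * (2 * C + 1)" using c1 c2 by (simp add: mult_mono)
  finally show ?thesis using finite_subset[OF sub fin] by (simp add: power2_eq_square)
qed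

lemma overlap_bound:
  fixes a b c d :: "real \<times> real"
  assumes ab: "a \<noteq> b" and I: "closed_segment a b \<inter> closed_segment c d \<subseteq> {a, b}"
  shows "\<exists>K. \<forall>k::real. 0 \<le> k \<longrightarrow>
     real (card (seg_lattice (k *\<^sub>R a) (k *\<^sub>R b) \<inter> seg_lattice (k *\<^sub>R c) (k *\<^sub>R d))) \<le> K"
proof -
  obtain w \<delta> where d: "\<delta> > 0" "\<forall>x\<in>closed_segment a b. \<forall>y\<in>closed_segment c d. \<delta> * dist x w \<le> dist x y"
    using seg_pair_sep[OF ab I] by blast
  define C where "C = 1 + 2 / \<delta>"
  have C0: "0 \<le> C" using d(1) by (simp add: C_def)
  show ?thesis
  proof (intro exI[of _ "(2 * C + 1)\<^sup>2"] allI impI)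
    fix k :: real assume k: "0 \<le> k"
    have sub: "seg_lattice (k *\<^sub>R a) (k *\<^sub>R b) \<inter> seg_lattice (k *\<^sub>R c) (k *\<^sub>R d) \<subseteq> {q. dist (rp q) (k *\<^sub>R w) \<le> C}"
    proof
      fix q assume q: "q \<in> seg_lattice (k *\<^sub>R a) (k *\<^sub>R b) \<inter> seg_lattice (k *\<^sub>R c) (k *\<^sub>R d)"
      obtain x where x: "x \<in> closed_segment (k *\<^sub>R a) (k *\<^sub>R b)" "dist (rp q) x < 1"
        using seg_lattice_near q by blast
      obtain y where y: "y \<in> closed_segment (k *\<^sub>R c) (k *\<^sub>R d)" "dist (rp q) y < 1"
        using seg_lattice_near q by blast
      obtain x0 where x0: "x0 \<in> closed_segment a b" "x = k *\<^sub>R x0" using scaled_segment[OF x(1)] by blast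
      obtain y0 where y0: "y0 \<in> closed_segment c d" "y = k *\<^sub>R y0" using scaled_segment[OF y(1)] by blast
      have "dist x y < 2" using x(2) y(2) dist_triangle3[of x y "rp q"] by linarith
      hence "k * dist x0 y0 < 2" using k by (simp add: x0(2) y0(2) dist_scale)
      moreover have "k * (\<delta> * dist x0 w) \<le> k * dist x0 y0"
        using d(2) x0(1) y0(1) k by (simp add: mult_left_mono)
      ultimately have "\<delta> * (k * dist x0 w) < 2" by (simp add: algebra_simps)
      hence "k * dist x0 w < 2 / \<delta>" using d(1) by (simp add: field_simps)
      hence "dist x (k *\<^sub>R w) < 2 / \<delta>" using k by (simp add: x0(2) dist_scale)
      hence "dist (rp q) (k *\<^sub>R w) < 1 + 2 / \<delta>" using x(2) dist_triangle[of "rp q" "k *\<^sub>R w" x] by linarith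
      thus "q \<in> {q. dist (rp q) (k *\<^sub>R w) \<le> C}" by (simp add: C_def)
    qed
    have ib: "finite {q. dist (rp q) (k *\<^sub>R w) \<le> C}" "real (card {q. dist (rp q) (k *\<^sub>R w) \<le> C}) \<le> (2 * C + 1)\<^sup>2"
      using int_ball_card[OF C0] by auto
    show "real (card (seg_lattice (k *\<^sub>R a) (k *\<^sub>R b) \<inter> seg_lattice (k *\<^sub>R c) (k *\<^sub>R d))) \<le> (2 * C + 1)\<^sup>2"
      using card_mono[OF ib(1) sub] ib(2) by linarith
  qed
qed



lemma lam_swap: "lam (x, y) = lam (y, x)"
  by (simp add: lam_def min.commute)

lemma lam_eq:
  assumes "\<bar>y\<bar> \<le> \<bar>x\<bar>" shows "lam (x, y) = \<bar>y / x\<bar>"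
proof (cases "y = 0")
  case True thus ?thesis by (simp add: lam_def)
next
  case False
  hence x: "x \<noteq> 0" using assms by auto
  have "\<bar>y / x\<bar> \<le> 1" using assms x by (simp add: abs_divide divide_le_eq_1)
  moreover have "1 \<le> \<bar>x / y\<bar>" using assms False by (simp add: abs_divide le_divide_eq_1)
  ultimately show ?thesis by (simp add: lam_def min_def)
qed

lemma norm_lam_aux:
  fixes x y :: real
  assumes "\<bar>y\<bar> \<le> \<bar>x\<bar>"
  shows "norm (x, y) / sqrt (1 + (lam (x, y))\<^sup>2) = \<bar>x\<bar>"
proof (cases "x = 0")
  case True thus ?thesis using assms by (simp add: lam_def)
next
  case False
  have "1 + (lam (x, y))\<^sup>2 = (x\<^sup>2 + y\<^sup>2) / x\<^sup>2"
    using False by (simp add: lam_eq[OF assms] power_divide field_simps)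
  hence "sqrt (1 + (lam (x, y))\<^sup>2) = sqrt (x\<^sup>2 + y\<^sup>2) / \<bar>x\<bar>"
    by (simp add: real_sqrt_divide)
  moreover have "norm (x, y) = sqrt (x\<^sup>2 + y\<^sup>2)" by (simp add: norm_Pair)
  moreover have "sqrt (x\<^sup>2 + y\<^sup>2) > 0" using False by (simp add: add_pos_nonneg)
  moreover have "sqrt (1 + (lam (x, y))\<^sup>2) > 0" by (simp add: add_pos_nonneg)
  ultimately show ?thesis using False by (simp add: field_simps)
qed

lemma norm_lam: "norm v / sqrt (1 + (lam v)\<^sup>2) = M v"
proof (cases v)
  case (Pair x y)
  show ?thesis
  proof (cases "\<bar>y\<bar> \<le> \<bar>x\<bar>")
    case True thus ?thesis using norm_lam_aux[OF True] by (simp add: Pair M_def max_def)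
  next
    case False
    hence le: "\<bar>x\<bar> \<le> \<bar>y\<bar>" by simp
    have "norm (x, y) = norm (y, x)" by (simp add: norm_Pair add.commute)
    thus ?thesis using norm_lam_aux[OF le] False by (simp add: Pair M_def max_def lam_swap)
  qed
qed

lemma M_scale: "0 \<le> k \<Longrightarrow> M (k *\<^sub>R v) = k * M v"
  by (simp add: M_def abs_mult max_def mult_left_mono mult_le_cancel_left)

lemma bonf:
  fixes A :: "nat \<Rightarrow> 'a set"
  assumes "\<And>r. r < n \<Longrightarrow> finite (A r)"
  shows "(\<Sum>r<n. real (card (A r))) \<le> real (card (\<Union>r<n. A r)) + (\<Sum>j<n. \<Sum>i<j. real (card (A i \<inter> A j)))"
  using assms
proof (induction n)
  case 0 thus ?case by simp
next
  case (Suc n)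
  have IH: "(\<Sum>r<n. real (card (A r))) \<le> real (card (\<Union>r<n. A r)) + (\<Sum>j<n. \<Sum>i<j. real (card (A i \<inter> A j)))"
    using Suc by auto
  have fU: "finite (\<Union>r<n. A r)" using Suc.prems by auto
  have fA: "finite (A n)" using Suc.prems by auto
  have U: "(\<Union>r<Suc n. A r) = (\<Union>r<n. A r) \<union> A n" by (auto simp: lessThan_Suc)
  have cu: "card ((\<Union>r<n. A r) \<union> A n) + card ((\<Union>r<n. A r) \<inter> A n) = card (\<Union>r<n. A r) + card (A n)"
    using card_Un_Int[OF fU fA] by simp
  have "(\<Union>r<n. A r) \<inter> A n = (\<Union>i<n. A i \<inter> A n)" by auto
  hence "card ((\<Union>r<n. A r) \<inter> A n) \<le> (\<Sum>i<n. card (A i \<inter> A n))"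
    using card_UN_le[of "{..<n}" "\<lambda>i. A i \<inter> A n"] by simp
  hence ci: "real (card ((\<Union>r<n. A r) \<inter> A n)) \<le> (\<Sum>i<n. real (card (A i \<inter> A n)))"
    by (metis of_nat_le_iff of_nat_sum)
  have cu': "real (card ((\<Union>r<n. A r) \<union> A n)) + real (card ((\<Union>r<n. A r) \<inter> A n)) = real (card (\<Union>r<n. A r)) + real (card (A n))"
    using cu by (metis of_nat_add)
  show ?case unfolding U using IH ci cu' by simp
qed



lemma poly_edge_ne:
  assumes "simple_polygon R p" "r < R" shows "p r \<noteq> p (Suc r mod R)"
proof -
  have R: "R \<ge> 3" "inj_on p {..<R}" using assms(1) by (auto simp: simple_polygon_def)
  have ne: "Suc r mod R \<noteq> r"
  proof (cases "Suc r < R")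
    case True thus ?thesis by simp
  next
    case False hence "Suc r = R" using assms(2) by simp
    thus ?thesis using R(1) by auto
  qed
  have "Suc r mod R < R" using R(1) by simp
  thus ?thesis using R(2) ne assms(2) by (auto dest: inj_onD)
qed

lemma poly_edges_meet:
  assumes "simple_polygon R p" "i < R" "j < R" "i \<noteq> j"
  shows "closed_segment (p i) (p (Suc i mod R)) \<inter> closed_segment (p j) (p (Suc j mod R)) \<subseteq> {p i, p (Suc i mod R)}"
  using assms unfolding simple_polygon_def by blast

theorem lemma6p4:
  fixes R :: nat and p :: "nat \<Rightarrow> real \<times> real"
  assumes "simple_polygon R p"
  shows "(\<lambda>k::nat. real (card (polygon_lattice R (\<lambda>i. real k *\<^sub>R p i)))
                    / perimeter R (\<lambda>i. real k *\<^sub>R p i))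
         \<longlonglongrightarrow> (\<Sum>r<R. 1 / sqrt (1 + (lam (p (Suc r mod R) - p r))\<^sup>2)
                        * (dist (p r) (p (Suc r mod R)) / perimeter R p))"
proof -
  note sp = assms
  have R3: "R \<ge> 3" using sp by (simp add: simple_polygon_def)
  define E where "E k r = seg_lattice (real k *\<^sub>R p r) (real k *\<^sub>R p (Suc r mod R))" for k r
  define Mr where "Mr r = M (p (Suc r mod R) - p r)" for r
  define S where "S = (\<Sum>r<R. Mr r)"
  define P where "P = perimeter R p"
  define c where "c k = real (card (\<Union>r<R. E k r))" for k
  have PL: "polygon_lattice R (\<lambda>i. real k *\<^sub>R p i) = (\<Union>r<R. E k r)" for k
    by (simp add: polygon_lattice_def E_def)
  have PS: "perimeter R (\<lambda>i. real k *\<^sub>R p i) = real k * P" for k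
    by (simp add: perimeter_def P_def dist_scale sum_distrib_left)
  have Ppos: "P > 0"
  proof -
    have "dist (p 0) (p (Suc 0 mod R)) > 0" using poly_edge_ne[OF sp, of 0] R3 by simp
    moreover have "dist (p 0) (p (Suc 0 mod R)) \<le> P" unfolding P_def perimeter_def
      using member_le_sum[of 0 "{..<R}" "\<lambda>r. dist (p r) (p (Suc r mod R))"] R3 by simp
    ultimately show ?thesis by linarith
  qed
  have finE: "finite (E k r)" for k r unfolding E_def by (rule seg_lattice_card(1))
  have cardE: "\<bar>real (card (E k r)) - real k * Mr r\<bar> \<le> 1" for k r
  proof -
    have "real k *\<^sub>R p (Suc r mod R) - real k *\<^sub>R p r = real k *\<^sub>R (p (Suc r mod R) - p r)"
      by (simp add: scaleR_right_diff_distrib)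
    thus ?thesis using seg_lattice_card(2)[of "real k *\<^sub>R p r" "real k *\<^sub>R p (Suc r mod R)"]
      by (simp add: E_def Mr_def M_scale)
  qed
  define Kf where "Kf i j = (SOME K. \<forall>k::real. 0 \<le> k \<longrightarrow>
     real (card (seg_lattice (k *\<^sub>R p i) (k *\<^sub>R p (Suc i mod R)) \<inter> seg_lattice (k *\<^sub>R p j) (k *\<^sub>R p (Suc j mod R)))) \<le> K)" for i j
  have Kf: "real (card (E k i \<inter> E k j)) \<le> Kf i j" if "i < R" "j < R" "i \<noteq> j" for k i j
  proof -
    have "\<exists>K. \<forall>k::real. 0 \<le> k \<longrightarrow>
     real (card (seg_lattice (k *\<^sub>R p i) (k *\<^sub>R p (Suc i mod R)) \<inter> seg_lattice (k *\<^sub>R p j) (k *\<^sub>R p (Suc j mod R)))) \<le> K"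
      by (rule overlap_bound[OF poly_edge_ne[OF sp that(1)] poly_edges_meet[OF sp that]])
    from someI_ex[OF this] show ?thesis unfolding Kf_def E_def by simp
  qed
  define KK where "KK = (\<Sum>j<R. \<Sum>i<j. Kf i j)"
  define B where "B = real R + \<bar>KK\<bar>"
  have bound: "\<bar>c k - real k * S\<bar> \<le> B" for k
  proof -
    have sumE: "(\<Sum>r<R. real (card (E k r))) \<le> real k * S + real R"
    proof -
      have "(\<Sum>r<R. real (card (E k r))) \<le> (\<Sum>r<R. real k * Mr r + 1)"
      proof (rule sum_mono)
        fix r show "real (card (E k r)) \<le> real k * Mr r + 1" using cardE[of k r] by (simp add: abs_le_iff)
      qed
      thus ?thesis by (simp add: S_def sum.distrib sum_distrib_left)
    qed
    have sumE2: "real k * S - real R \<le> (\<Sum>r<R. real (card (E k r)))"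
    proof -
      have "(\<Sum>r<R. real k * Mr r - 1) \<le> (\<Sum>r<R. real (card (E k r)))"
      proof (rule sum_mono)
        fix r show "real k * Mr r - 1 \<le> real (card (E k r))" using cardE[of k r] by (simp add: abs_le_iff)
      qed
      thus ?thesis by (simp add: S_def sum_subtractf sum_distrib_left)
    qed
    have up: "c k \<le> (\<Sum>r<R. real (card (E k r)))"
    proof -
      have "card (\<Union>r<R. E k r) \<le> (\<Sum>r<R. card (E k r))" by (rule card_UN_le) simp
      thus ?thesis unfolding c_def by (metis of_nat_le_iff of_nat_sum)
    qed
    have ov: "(\<Sum>j<R. \<Sum>i<j. real (card (E k i \<inter> E k j))) \<le> KK"
      unfolding KK_def
      by (intro sum_mono) (use Kf in auto)
    have lo: "(\<Sum>r<R. real (card (E k r))) \<le> c k + (\<Sum>j<R. \<Sum>i<j. real (card (E k i \<inter> E k j)))"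
      unfolding c_def by (rule bonf) (rule finE)
    show ?thesis unfolding B_def abs_le_iff using sumE sumE2 up ov lo by linarith
  qed
  have lim0: "(\<lambda>k. c k / (real k * P) - S / P) \<longlonglongrightarrow> 0"
  proof (rule Lim_null_comparison)
    show "\<forall>\<^sub>F k in sequentially. norm (c k / (real k * P) - S / P) \<le> B / P * inverse (real k)"
    proof (rule eventually_sequentiallyI[of 1])
      fix k :: nat assume k: "1 \<le> k"
      hence kp: "real k * P > 0" using Ppos by simp
      have "c k / (real k * P) - S / P = (c k - real k * S) / (real k * P)"
      proof -
        have k0: "real k > 0" using k by simp
        have "(c k - real k * S) / (real k * P) = c k / (real k * P) - (real k * S) / (real k * P)"
          by (rule diff_divide_distrib)
        also have "(real k * S) / (real k * P) = S / P" using k0 by simp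
        finally show ?thesis by simp
      qed
      hence "norm (c k / (real k * P) - S / P) = \<bar>c k - real k * S\<bar> / (real k * P)"
        using kp by simp
      also have "\<dots> \<le> B / (real k * P)" using bound[of k] kp by (simp add: divide_right_mono)
      also have "\<dots> = B / P * inverse (real k)" by (simp add: field_simps)
      finally show "norm (c k / (real k * P) - S / P) \<le> B / P * inverse (real k)" .
    qed
    show "(\<lambda>k. B / P * inverse (real k)) \<longlonglongrightarrow> 0"
      by (rule tendsto_mult_right_zero) (rule lim_inverse_n)
  qed
  have lim: "(\<lambda>k. c k / (real k * P)) \<longlonglongrightarrow> S / P"
    by (rule Lim_transform[OF tendsto_const lim0])
  have target: "(\<Sum>r<R. 1 / sqrt (1 + (lam (p (Suc r mod R) - p r))\<^sup>2)
                        * (dist (p r) (p (Suc r mod R)) / perimeter R p)) = S / P"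
  proof -
    have "1 / sqrt (1 + (lam (p (Suc r mod R) - p r))\<^sup>2) * (dist (p r) (p (Suc r mod R)) / P) = Mr r / P" for r
    proof -
      have "dist (p r) (p (Suc r mod R)) = norm (p (Suc r mod R) - p r)" by (simp add: dist_norm norm_minus_commute)
      thus ?thesis using norm_lam[of "p (Suc r mod R) - p r"] by (simp add: Mr_def)
    qed
    thus ?thesis unfolding S_def P_def[symmetric] by (simp add: sum_divide_distrib)
  qed
  show ?thesis unfolding target PL PS using lim by (simp add: c_def)
qed


end
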